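(* Let $\mathcal{B}$ be the Borel $\sigma$-algebra of $[0,1]$ and let $\mathcal{D}=\{f^{-1}(B):B\in\mathcal{B}\}$, where $f\colon[0,1]\to[0,1]$ is constructed as described in the context. Then the $\sigma$-algebra $$\big((\mathcal{D}\vee\mathcal{B})\otimes\mathcal{B}\big)\cap\big((\mathcal{D}\vee\mathcal{B})\otimes\mathcal{D}\big)$$ on $[0,1]^2$ is not of the form $\mathcal{A}_0\otimes\mathcal{E}$ for any $\sigma$-algebras $\mathcal{A}_0,\mathcal{E}$ on $[0,1]$.
   Context: Construction of $f$: let $\omega_{\mathfrak{c}}$ be the first ordinal of cardinality $\mathfrak{c}$ (the continuum), and let $(M_\alpha)_{1\le\alpha<\omega_{\mathfrak{c}}}$ be an enumeration of all uncountable Borel subsets of $[0,1]$ with uncountable complement. By transfinite recursion choose for each $\alpha<\omega_{\mathfrak{c}}$ three distinct points $x_\alpha,y_\alpha\in M_\alpha$, $z_\alpha\in[0,1]\setminus M_\alpha$ with $\{x_\alpha,y_\alpha,z_\alpha\}\cap\bigcup_{\beta<\alpha}\{x_\beta,y_\beta,z_\beta\}=\emptyset$. Define $f$ by $f(x_\alpha)=z_\alpha$, $f(z_\alpha)=x_\alpha$ for every $\alpha$, and $f(t)=t$ for all other $t$ (in particular $f(y_\alpha)=y_\alpha$). For $\sigma$-algebras $\mathcal{F},\mathcal{G}$ on a set, $\mathcal{F}\vee\mathcal{G}$ is the smallest $\sigma$-algebra containing $\mathcal{F}\cup\mathcal{G}$; $\otimes$ denotes the product $\sigma$-algebra (generated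 by measurable rectangles). *)

theory Defs
  imports "HOL-Analysis.Analysis"
begin

definition unit_borel :: "real measure" where
  "unit_borel = restrict_space borel {0..1}"

definition join_unit :: "real measure \<Rightarrow> real measure \<Rightarrow> real measure" where
  "join_unit F G = sigma {0..1} (sets F \<union> sets G)"

definition big_borel_sets :: "real set set" where
  "big_borel_sets = {M. M \<in> sets borel \<and> M \<subseteq> {0..1} \<and> uncountable M \<and> uncountable ({0..1} - M)}"

text \<open>f arises from the construction of the paper: an enumeration M (indexed by I) of
  big_borel_sets and pairwise disjoint triples of distinct points x i, y i in M i,
  z i in [0,1] - M i; f swaps x i and z i and fixes everything else.\<close>
definition constructed_f :: "'i set \<Rightarrow> ('i \<Rightarrow> real set) \<Rightarrow> ('i \<Rightarrow> real) \<Rightarrow> ('i \<Rightarrow> real)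
    \<Rightarrow> ('i \<Rightarrow> real) \<Rightarrow> (real \<Rightarrow> real) \<Rightarrow> bool" where
  "constructed_f I M x y z f \<longleftrightarrow>
     bij_betw M I big_borel_sets \<and>
     (\<forall>i\<in>I. x i \<in> M i \<and> y i \<in> M i \<and> z i \<in> {0..1} - M i \<and>
             x i \<noteq> y i \<and> x i \<noteq> z i \<and> y i \<noteq> z i) \<and>
     (\<forall>i\<in>I. \<forall>j\<in>I. i \<noteq> j \<longrightarrow> {x i, y i, z i} \<inter> {x j, y j, z j} = {}) \<and>
     (\<forall>i\<in>I. f (x i) = z i \<and> f (z i) = x i) \<and>
     (\<forall>t. t \<notin> x ` I \<union> z ` I \<longrightarrow> f t = t)"

end

theory Submission
  imports Defs
begin

lemma key_sigma:
  fixes P :: "'a measure" and E :: "'b measure"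
  assumes "S \<in> sets (P \<Otimes>\<^sub>M E)"
  shows "\<exists>K. countable K \<and> K \<subseteq> sets E \<and>
    (\<forall>t t'. (\<forall>k\<in>K. t\<in>k \<longleftrightarrow> t'\<in>k) \<longrightarrow> (\<forall>s. (s,t)\<in>S \<longleftrightarrow> (s,t')\<in>S))"
  using assms unfolding sets_pair_measure
proof (induction rule: sigma_sets.induct)
  case (Basic a)
  then obtain a1 b1 where ab: "a = a1 \<times> b1" "b1 \<in> sets E" by auto
  show ?case
    by (rule exI[of _ "{b1}"]) (auto simp: ab)
next
  case Empty
  then show ?case by (rule_tac exI[of _ "{}"]) auto
next
  case (Compl a)
  then obtain K where K: "countable K" "K \<subseteq> sets E"
    "\<forall>t t'. (\<forall>k\<in>K. t\<in>k \<longleftrightarrow> t'\<in>k) \<longrightarrow> (\<forall>s. (s,t)\<in>a \<longleftrightarrow> (s,t')\<in>a)" by blast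
  show ?case
    apply (rule exI[of _ "insert (space E) K"])
    using K by auto
next
  case (Union a)
  then have "\<forall>i. \<exists>K. countable K \<and> K \<subseteq> sets E \<and>
    (\<forall>t t'. (\<forall>k\<in>K. t\<in>k \<longleftrightarrow> t'\<in>k) \<longrightarrow> (\<forall>s. (s,t)\<in>a i \<longleftrightarrow> (s,t')\<in>a i))" by blast
  then obtain K where K: "\<And>i. countable (K i) \<and> K i \<subseteq> sets E \<and>
    (\<forall>t t'. (\<forall>k\<in>K i. t\<in>k \<longleftrightarrow> t'\<in>k) \<longrightarrow> (\<forall>s. (s,t)\<in>a i \<longleftrightarrow> (s,t')\<in>a i))"
    by metis
  show ?case
    apply (rule exI[of _ "\<Union>i. K i"])
    using K by (auto simp: UN_subset_iff) blast+
qed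

lemma big_uncountable: "uncountable big_borel_sets"
proof
  assume c: "countable big_borel_sets"
  have "(\<lambda>r::real. {0..r}) ` {1/4..1/2} \<subseteq> big_borel_sets"
  proof
    fix S assume "S \<in> (\<lambda>r::real. {0..r}) ` {1/4..1/2}"
    then obtain r where r: "r \<in> {1/4..1/2}" "S = {0..r}" by auto
    have "{0..1} - {0..r} = {r<..1}" using r by auto
    moreover have "uncountable {0..r}" using r uncountable_closed_interval[of 0 r] by simp
    moreover have "uncountable {r<..1}" using r uncountable_half_open_interval_2[of r 1] by simp
    moreover have "{0..r} \<subseteq> {0..1::real}" using r by simp
    ultimately show "S \<in> big_borel_sets" unfolding big_borel_sets_def r(2) by simp
  qed
  moreover have "inj_on (\<lambda>r::real. {0..r}) {1/4..1/2}"
  proof (rule inj_onI)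
    fix a b :: real assume "a \<in> {1/4..1/2}" "b \<in> {1/4..1/2}" "{0..a} = {0..b}"
    then have "a \<in> {0..b}" "b \<in> {0..a}" by auto
    then show "a = b" by simp
  qed
  ultimately have "countable {1/4..1/2::real}"
  proof -
    assume a1: "(\<lambda>r::real. {0..r}) ` {1/4..1/2} \<subseteq> big_borel_sets" and a2: "inj_on (\<lambda>r::real. {0..r}) {1/4..1/2}"
    have "countable ((\<lambda>r::real. {0..r}) ` {1/4..1/2})" using countable_subset[OF a1 c] .
    then show ?thesis using countable_image_inj_on[OF _ a2] by blast
  qed
  moreover have "uncountable {1/4..1/2::real}" by (subst uncountable_closed_interval) simp
  ultimately show False by blast
qed

lemma facts:
  assumes "constructed_f I M x y z f"
  shows "\<And>t. f (f t) = t" and "\<And>t. t \<in> {0..1} \<Longrightarrow> f t \<in> {0..1}"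
    and "\<And>V. V \<in> sets borel \<Longrightarrow> V \<subseteq> {0..1} \<Longrightarrow> (\<And>t. f t \<in> V \<longleftrightarrow> t \<in> V) \<Longrightarrow> countable V \<or> countable ({0..1} - V)"
    and "\<And>i. i \<in> I \<Longrightarrow> f (y i) = y i"
    and "countable (y ` I) \<Longrightarrow> countable I"
    and "y ` I \<subseteq> {0..1}"
    and "bij_betw M I big_borel_sets"
proof -
  note A0 = assms[unfolded constructed_f_def]
  note A1 = A0[THEN conjunct1] and A2 = A0[THEN conjunct2, THEN conjunct1]
    and A3 = A0[THEN conjunct2, THEN conjunct2, THEN conjunct1]
    and A4 = A0[THEN conjunct2, THEN conjunct2, THEN conjunct2, THEN conjunct1]
    and A5 = A0[THEN conjunct2, THEN conjunct2, THEN conjunct2, THEN conjunct2]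
  show bij: "bij_betw M I big_borel_sets" by (rule A1)
  have Mi: "\<And>i. i \<in> I \<Longrightarrow> M i \<in> big_borel_sets" by (rule bij_betw_apply[OF bij])
  have Msub: "\<And>i. i \<in> I \<Longrightarrow> M i \<subseteq> {0..1}" using Mi by (simp add: big_borel_sets_def)
  have pts: "\<And>i. i\<in>I \<Longrightarrow> x i \<in> M i \<and> y i \<in> M i \<and> z i \<in> {0..1} - M i \<and>
             x i \<noteq> y i \<and> x i \<noteq> z i \<and> y i \<noteq> z i" using A2 by blast
  have disj: "\<And>i j. i\<in>I \<Longrightarrow> j\<in>I \<Longrightarrow> i \<noteq> j \<Longrightarrow> {x i, y i, z i} \<inter> {x j, y j, z j} = {}"
    using A3 by blast
  have fx: "\<And>i. i\<in>I \<Longrightarrow> f (x i) = z i \<and> f (z i) = x i" using A4 by blast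
  have fo: "\<And>t. t \<notin> x ` I \<union> z ` I \<Longrightarrow> f t = t" using A5 by blast
  show ff: "\<And>t. f (f t) = t"
  proof -
    fix t
    show "f (f t) = t"
    proof (cases "t \<in> x ` I \<union> z ` I")
      case True
      then obtain i where i: "i \<in> I" "t = x i \<or> t = z i" by blast
      then show ?thesis using fx[OF i(1)] by metis
    next
      case False
      then show ?thesis using fo by simp
    qed
  qed
  show f01: "\<And>t. t \<in> {0..1} \<Longrightarrow> f t \<in> {0..1}"
  proof -
    fix t :: real assume t: "t \<in> {0..1}"
    show "f t \<in> {0..1}"
    proof (cases "t \<in> x ` I \<union> z ` I")
      case True
      then obtain i where i: "i \<in> I" "t = x i \<or> t = z i" by blast
      have "x i \<in> {0..1}" "z i \<in> {0..1}" using pts[OF i(1)] Msub[OF i(1)] by blast+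
      then show ?thesis using fx[OF i(1)] i(2) by metis
    next
      case False
      then show ?thesis using fo t by simp
    qed
  qed
  show "\<And>V. V \<in> sets borel \<Longrightarrow> V \<subseteq> {0..1} \<Longrightarrow> (\<And>t. f t \<in> V \<longleftrightarrow> t \<in> V) \<Longrightarrow> countable V \<or> countable ({0..1} - V)"
  proof (rule ccontr)
    fix V assume V: "V \<in> sets borel" "V \<subseteq> {0..1}" "\<And>t. f t \<in> V \<longleftrightarrow> t \<in> V"
      and n: "\<not> (countable V \<or> countable ({0..1} - V))"
    then have "V \<in> big_borel_sets" unfolding big_borel_sets_def by blast
    then obtain i where i: "i \<in> I" "V = M i" using bij unfolding bij_betw_def by (metis imageE)
    have "x i \<in> V" "z i \<notin> V" using pts[OF i(1)] i(2) by blast+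
    then show False using fx[OF i(1)] V(3)[of "x i"] by simp
  qed
  have ynot: "\<And>i. i \<in> I \<Longrightarrow> y i \<notin> x ` I \<union> z ` I"
  proof
    fix i assume i: "i \<in> I" and "y i \<in> x ` I \<union> z ` I"
    then obtain j where j: "j \<in> I" "y i = x j \<or> y i = z j" by blast
    show False
    proof (cases "i = j")
      case True then show ?thesis using pts[OF i] j by metis
    next
      case False 
      have "y i \<in> {x i, y i, z i} \<inter> {x j, y j, z j}" using j(2) by blast
      then show ?thesis using disj[OF i j(1) False] by simp
    qed
  qed
  show "\<And>i. i \<in> I \<Longrightarrow> f (y i) = y i" using ynot fo by blast
  have "inj_on y I"
  proof (rule inj_onI)
    fix i j assume ij: "i \<in> I" "j \<in> I" "y i = y j"
    show "i = j"
    proof (rule ccontr)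
      assume "i \<noteq> j"
      moreover have "y i \<in> {x i, y i, z i} \<inter> {x j, y j, z j}" using ij(3) by blast
      ultimately show False using disj[OF ij(1,2)] by simp
    qed
  qed
  then show "countable (y ` I) \<Longrightarrow> countable I" using countable_image_inj_on by blast
  show "y ` I \<subseteq> {0..1}" using pts Msub by blast
qed

theorem corollary2p5:
  fixes I :: "'i set" and M :: "'i \<Rightarrow> real set" and x y z :: "'i \<Rightarrow> real"
    and f :: "real \<Rightarrow> real"
  assumes "constructed_f I M x y z f"
  defines "\<D> \<equiv> vimage_algebra {0..1} f unit_borel"
  shows "\<not> (\<exists>A0 E :: real measure. space A0 = {0..1} \<and> space E = {0..1} \<and>
           sets (A0 \<Otimes>\<^sub>M E) =
             sets (join_unit \<D> unit_borel \<Otimes>\<^sub>M unit_borel) \<inter>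
             sets (join_unit \<D> unit_borel \<Otimes>\<^sub>M \<D>))"
proof
  assume "\<exists>A0 E :: real measure. space A0 = {0..1} \<and> space E = {0..1} \<and>
           sets (A0 \<Otimes>\<^sub>M E) =
             sets (join_unit \<D> unit_borel \<Otimes>\<^sub>M unit_borel) \<inter>
             sets (join_unit \<D> unit_borel \<Otimes>\<^sub>M \<D>)"
  then obtain A0 E :: "real measure" where sA0: "space A0 = {0..1}" and sE: "space E = {0..1}"
    and eq: "sets (A0 \<Otimes>\<^sub>M E) =
             sets (join_unit \<D> unit_borel \<Otimes>\<^sub>M unit_borel) \<inter>
             sets (join_unit \<D> unit_borel \<Otimes>\<^sub>M \<D>)" by blast
  define U where "U = {0..1::real}"
  define A where "A = join_unit \<D> unit_borel"
  note ff = facts(1)[OF assms(1)]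
  note f01 = facts(2)[OF assms(1)]
  note inv = facts(3)[OF assms(1)]
  note yfix = facts(4)[OF assms(1)]
  note ycount = facts(5)[OF assms(1)]
  note yU = facts(6)[OF assms(1)]
  note bij = facts(7)[OF assms(1)]
  have sUB: "space unit_borel = U" by (simp add: unit_borel_def U_def)
  have UB_iff: "\<And>b. b \<in> sets unit_borel \<longleftrightarrow> b \<subseteq> U \<and> b \<in> sets borel"
    unfolding unit_borel_def U_def by (subst sets_restrict_space_iff) auto
  have fU: "f \<in> U \<rightarrow> space unit_borel" using f01 sUB U_def by auto
  have sD: "space \<D> = U" by (simp add: \<D>_def U_def)
  have setsD: "sets \<D> = {f -` B \<inter> U | B. B \<in> sets unit_borel}"
    unfolding \<D>_def U_def using fU U_def by (simp add: sets_vimage_algebra2)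
  have subD: "sets \<D> \<subseteq> Pow U" using sD sets.sets_into_space by blast
  have subUB: "sets unit_borel \<subseteq> Pow U" using UB_iff by blast
  have sA: "space A = U" unfolding A_def join_unit_def U_def by (simp add: space_measure_of_conv)
  have setsA: "sets A = sigma_sets U (sets \<D> \<union> sets unit_borel)"
    unfolding A_def join_unit_def U_def using subD subUB U_def
    by (simp add: sets_measure_of)
  have DA: "sets \<D> \<subseteq> sets A" unfolding setsA by (auto intro: sigma_sets.Basic)
  have UBA: "sets unit_borel \<subseteq> sets A" unfolding setsA by (auto intro: sigma_sets.Basic)
  have idA: "(\<lambda>t. t) \<in> A \<rightarrow>\<^sub>M unit_borel"
  proof (rule measurableI)
    fix t assume "t \<in> space A" then show "t \<in> space unit_borel" using sA sUB by simp
  next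
    fix b assume b: "b \<in> sets unit_borel"
    then have "(\<lambda>t. t) -` b \<inter> space A = b" using UB_iff sA by auto
    then show "(\<lambda>t. t) -` b \<inter> space A \<in> sets A" using b UBA by auto
  qed
  have idUB: "(\<lambda>t. t) \<in> unit_borel \<rightarrow>\<^sub>M borel"
    unfolding unit_borel_def by (rule measurable_restrict_space1) simp
  have fA: "f \<in> A \<rightarrow>\<^sub>M unit_borel"
  proof (rule measurableI)
    fix t assume "t \<in> space A" then show "f t \<in> space unit_borel" using sA fU by auto
  next
    fix b assume b: "b \<in> sets unit_borel"
    have "f -` b \<inter> space A \<in> sets \<D>" unfolding setsD sA using b by blast
    then show "f -` b \<inter> space A \<in> sets A" using DA by auto
  qed
  have fD: "f \<in> \<D> \<rightarrow>\<^sub>M unit_borel"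
    unfolding \<D>_def using fU U_def by (simp add: measurable_vimage_algebra1)
  define Delta where "Delta = {p \<in> U \<times> U. fst p = snd p}"
  have D1: "Delta \<in> sets (A \<Otimes>\<^sub>M unit_borel)"
  proof -
    have m1: "(\<lambda>p. fst p) \<in> borel_measurable (A \<Otimes>\<^sub>M unit_borel)"
      using measurable_comp[OF measurable_fst measurable_comp[OF idA idUB]] by (simp add: comp_def)
    have m2: "(\<lambda>p. snd p) \<in> borel_measurable (A \<Otimes>\<^sub>M unit_borel)"
      using measurable_comp[OF measurable_snd idUB] by (simp add: comp_def)
    have "{w \<in> space (A \<Otimes>\<^sub>M unit_borel). fst w = snd w} \<in> sets (A \<Otimes>\<^sub>M unit_borel)"
      using m1 m2 by (rule borel_measurable_eq)
    moreover have "{w \<in> space (A \<Otimes>\<^sub>M unit_borel). fst w = snd w} = Delta"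
      unfolding Delta_def space_pair_measure sA sUB by simp
    ultimately show ?thesis by simp
  qed
  have D2: "Delta \<in> sets (A \<Otimes>\<^sub>M \<D>)"
  proof -
    have m1: "(\<lambda>p. f (fst p)) \<in> borel_measurable (A \<Otimes>\<^sub>M \<D>)"
      using measurable_comp[OF measurable_fst measurable_comp[OF fA idUB]] by (simp add: comp_def)
    have m2: "(\<lambda>p. f (snd p)) \<in> borel_measurable (A \<Otimes>\<^sub>M \<D>)"
      using measurable_comp[OF measurable_snd measurable_comp[OF fD idUB]] by (simp add: comp_def)
    have "{w \<in> space (A \<Otimes>\<^sub>M \<D>). f (fst w) = f (snd w)} \<in> sets (A \<Otimes>\<^sub>M \<D>)"
      using m1 m2 by (rule borel_measurable_eq)
    moreover have "{w \<in> space (A \<Otimes>\<^sub>M \<D>). f (fst w) = f (snd w)} = Delta"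
    proof -
      have injf: "\<And>a b. f a = f b \<longleftrightarrow> a = b" using ff by metis
      show ?thesis unfolding Delta_def space_pair_measure sA sD by (simp add: injf)
    qed
    ultimately show ?thesis by simp
  qed
  have DAE: "Delta \<in> sets (A0 \<Otimes>\<^sub>M E)" using eq D1 D2 unfolding A_def by blast
  have Ecc: "\<And>e. e \<in> sets E \<Longrightarrow> countable e \<or> countable (U - e)"
  proof -
    fix e assume e: "e \<in> sets E"
    have "U \<times> e \<in> sets (A0 \<Otimes>\<^sub>M E)" using pair_measureI[OF sets.top[of A0] e] sA0 U_def by simp
    then have r1: "U \<times> e \<in> sets (A \<Otimes>\<^sub>M unit_borel)" and r2: "U \<times> e \<in> sets (A \<Otimes>\<^sub>M \<D>)"
      using eq unfolding A_def by auto
    have pe: "Pair 0 -` (U \<times> e) = e" unfolding U_def by auto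
    have eUB: "e \<in> sets unit_borel" using sets_Pair1[OF r1, of 0] pe by simp
    have eD: "e \<in> sets \<D>" using sets_Pair1[OF r2, of 0] pe by simp
    have eU: "e \<subseteq> U" and eb: "e \<in> sets borel" using eUB UB_iff by auto
    obtain B where B: "B \<in> sets unit_borel" "e = f -` B \<inter> U" using eD setsD by blast
    have BU: "B \<subseteq> U" and Bb: "B \<in> sets borel" using B(1) UB_iff by auto
    have fU': "f t \<in> U \<longleftrightarrow> t \<in> U" for t
    proof
      assume "f t \<in> U"
      then have "f (f t) \<in> U" using f01[of "f t"] unfolding U_def by blast
      then show "t \<in> U" using ff[of t] by simp
    next
      assume "t \<in> U"
      then show "f t \<in> U" using f01[of t] unfolding U_def by blast
    qed
    have eiff: "w \<in> e \<longleftrightarrow> f w \<in> B \<and> w \<in> U" for w using B(2) by blast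
    have k1: "f t \<in> e \<longleftrightarrow> t \<in> B" for t
    proof
      assume "f t \<in> e"
      then have "f (f t) \<in> B" using eiff by blast
      then show "t \<in> B" using ff[of t] by simp
    next
      assume tB: "t \<in> B"
      then have "t \<in> U" using BU by blast
      then have "f t \<in> U" using fU' by blast
      moreover have "f (f t) \<in> B" using tB ff[of t] by simp
      ultimately show "f t \<in> e" using eiff by blast
    qed
    have k2: "f t \<in> B \<longleftrightarrow> t \<in> e" for t
    proof
      assume "f t \<in> B"
      moreover then have "f t \<in> U" using BU by blast
      ultimately show "t \<in> e" using eiff fU' by blast
    next
      assume "t \<in> e"
      then show "f t \<in> B" using eiff by blast
    qed
    define Uu where "Uu = e \<union> B"
    define L where "L = e \<inter> B"
    have cU: "countable Uu \<or> countable (U - Uu)"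
    proof -
      have "Uu \<in> sets borel" unfolding Uu_def using eb Bb by blast
      moreover have "Uu \<subseteq> {0..1}" unfolding Uu_def using eU BU U_def by blast
      moreover have "f t \<in> Uu \<longleftrightarrow> t \<in> Uu" for t unfolding Uu_def using k1[of t] k2[of t] by blast
      ultimately show ?thesis using inv[of Uu] U_def by blast
    qed
    have cL: "countable L \<or> countable (U - L)"
    proof -
      have "L \<in> sets borel" unfolding L_def using eb Bb by blast
      moreover have "L \<subseteq> {0..1}" unfolding L_def using eU BU U_def by blast
      moreover have "f t \<in> L \<longleftrightarrow> t \<in> L" for t unfolding L_def using k1[of t] k2[of t] by blast
      ultimately show ?thesis using inv[of L] U_def by blast
    qed
    show "countable e \<or> countable (U - e)"
    proof (cases "countable Uu \<or> countable (U - L)")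
      case True
      then show ?thesis
      proof
        assume "countable Uu" then show ?thesis unfolding Uu_def by (meson countable_subset sup_ge1)
      next
        assume "countable (U - L)" then show ?thesis unfolding L_def
          by (metis countable_subset Diff_mono inf_le1 order_refl)
      qed
    next
      case False
      then have c1: "countable (U - Uu)" and c2: "countable L" using cU cL by auto
      have "y ` I \<subseteq> (U - Uu) \<union> L"
      proof
        fix w assume "w \<in> y ` I"
        then obtain i where i: "i \<in> I" "w = y i" by blast
        have "w \<in> U" using yU i unfolding U_def by blast
        moreover have "w \<in> e \<longleftrightarrow> w \<in> B" using k1[of w] yfix[OF i(1)] i(2) by simp
        ultimately show "w \<in> (U - Uu) \<union> L" unfolding Uu_def L_def by auto
      qed
      moreover have "countable ((U - Uu) \<union> L)" using c1 c2 by simp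
      ultimately have "countable (y ` I)" by (rule countable_subset)
      then have "countable I" by (rule ycount)
      moreover have "M ` I = big_borel_sets" using bij by (rule bij_betw_imp_surj_on)
      ultimately have "countable big_borel_sets" using countable_image[of I M] by simp
      then show ?thesis using big_uncountable by simp
    qed
  qed
  obtain K where K: "countable K" "K \<subseteq> sets E"
    "\<forall>t t'. (\<forall>k\<in>K. t\<in>k \<longleftrightarrow> t'\<in>k) \<longrightarrow> (\<forall>s. (s,t)\<in>Delta \<longleftrightarrow> (s,t')\<in>Delta)"
    using key_sigma[OF DAE] by blast
  define N where "N = (\<Union>k\<in>K. if countable k then k else U - k)"
  have Kc: "\<And>k. k \<in> K \<Longrightarrow> countable k \<or> countable (U - k)" using K(2) Ecc by blast
  have cN: "countable N" unfolding N_def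
  proof (rule countable_UN[OF K(1)])
    fix k assume "k \<in> K"
    then show "countable (if countable k then k else U - k)" using Kc[of k] by auto
  qed
  have "uncountable (U - N)"
  proof
    assume "countable (U - N)"
    then have "countable ((U - N) \<union> N)" using cN by (rule countable_Un)
    moreover have "U \<subseteq> (U - N) \<union> N" by blast
    ultimately have "countable U" using countable_subset by blast
    then show False unfolding U_def using uncountable_closed_interval[of 0 "1::real"] by simp
  qed
  then obtain t where t: "t \<in> U - N" by (metis countable_empty ex_in_conv)
  have "uncountable (U - N - {t})" using \<open>uncountable (U - N)\<close> by (metis countable_insert insert_Diff_single countable_subset subset_insertI)
  then obtain t' where t': "t' \<in> U - N - {t}" by (metis countable_empty ex_in_conv)
  have "\<forall>k\<in>K. t\<in>k \<longleftrightarrow> t'\<in>k"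
  proof
    fix k assume k: "k \<in> K"
    show "t\<in>k \<longleftrightarrow> t'\<in>k"
    proof (cases "countable k")
      case True
      then have "k \<subseteq> N" unfolding N_def using k by auto
      then show ?thesis using t t' by auto
    next
      case False
      then have "U - k \<subseteq> N" unfolding N_def using k by auto
      then show ?thesis using t t' by auto
    qed
  qed
  then have "(t,t) \<in> Delta \<longleftrightarrow> (t,t') \<in> Delta" using K(3) by blast
  moreover have "(t,t) \<in> Delta" unfolding Delta_def using t by auto
  ultimately have "t = t'" unfolding Delta_def by auto
  then show False using t' by auto
qed

end
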